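(* For all $n\ge 0$, $|F_n(321,2143,3124)|=\binom{n}{2}+1$.
   Context: A permutation $\pi$ avoids a classical pattern $p\in S_k$ if no subsequence of $\pi$ of length $k$ is order-isomorphic to $p$. A Fishburn permutation is a permutation $\pi=\pi_1\cdots\pi_n$ of $[n]$ for which there are no indices $i<j$ with $\pi_j<\pi_i<\pi_{i+1}$ and $\pi_i=\pi_j+1$. $F_n(\sigma_1,\dots,\sigma_k)$ denotes the set of Fishburn permutations of length $n$ avoiding each of the classical patterns $\sigma_1,\dots,\sigma_k$ (with $F_0$ containing only the empty permutation). *)

theory Defs
  imports Main
begin

text \<open>Permutations of [n] are represented as lists: a list \<pi> is a permutation of
  [n] iff it is distinct and its set of entries is {1..n}. Positions are 0-indexed.\<close>

definition is_perm :: "nat \<Rightarrow> nat list \<Rightarrow> bool" where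
  "is_perm n \<pi> \<longleftrightarrow> distinct \<pi> \<and> set \<pi> = {1..n}"

definition contains :: "nat list \<Rightarrow> nat list \<Rightarrow> bool" where
  "contains \<pi> p \<longleftrightarrow> (\<exists>idx :: nat list.
      length idx = length p \<and> sorted_wrt (<) idx \<and> (\<forall>i\<in>set idx. i < length \<pi>) \<and>
      (\<forall>a < length p. \<forall>b < length p. (\<pi> ! (idx ! a) < \<pi> ! (idx ! b)) \<longleftrightarrow> (p ! a < p ! b)))"

definition avoids :: "nat list \<Rightarrow> nat list \<Rightarrow> bool" where
  "avoids \<pi> p \<longleftrightarrow> \<not> contains \<pi> p"

definition fishburn :: "nat list \<Rightarrow> bool" where
  "fishburn \<pi> \<longleftrightarrow> \<not> (\<exists>i j. i < j \<and> j < length \<pi> \<and> i + 1 < length \<pi> \<and>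
      \<pi> ! j < \<pi> ! i \<and> \<pi> ! i < \<pi> ! (i + 1) \<and> \<pi> ! i = \<pi> ! j + 1)"

definition F :: "nat \<Rightarrow> nat list list \<Rightarrow> nat list set" where
  "F n ps = {\<pi>. is_perm n \<pi> \<and> fishburn \<pi> \<and> (\<forall>p\<in>set ps. avoids \<pi> p)}"

end

theory Submission
  imports Defs
begin


lemma len3: "length xs = 3 \<Longrightarrow> \<exists>a b c. xs = [a,b,c]"
  by (cases xs; cases "tl xs"; cases "tl (tl xs)"; auto simp: numeral_3_eq_3)
lemma len4: "length xs = 4 \<Longrightarrow> \<exists>a b c d. xs = [a,b,c,d]"
  by (cases xs; cases "tl xs"; cases "tl (tl xs)"; cases "tl (tl (tl xs))"; auto simp: numeral_eq_Suc)

lemma c321: "contains \<pi> [3,2,1] \<longleftrightarrow>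
  (\<exists>i k l. i<k \<and> k<l \<and> l<length \<pi> \<and> \<pi>!l<\<pi>!k \<and> \<pi>!k<\<pi>!i)"
proof
  assume "contains \<pi> [3,2,1]"
  then obtain idx where h: "length idx = length [3,2,1::nat]" "sorted_wrt (<) idx" "\<forall>i\<in>set idx. i < length \<pi>"
    "\<forall>a < length [3,2,1::nat]. \<forall>b < length [3,2,1::nat]. (\<pi> ! (idx ! a) < \<pi> ! (idx ! b)) \<longleftrightarrow> ([3,2,1::nat] ! a < [3,2,1::nat] ! b)"
    unfolding contains_def by blast
  from len3[of idx] h(1) obtain a b c where e: "idx = [a,b,c]" by auto
  have "\<pi>!c<\<pi>!b" "\<pi>!b<\<pi>!a" using h(4)[rule_format, of 2 1] h(4)[rule_format, of 1 0] e by auto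
  thus "\<exists>i k l. i<k \<and> k<l \<and> l<length \<pi> \<and> \<pi>!l<\<pi>!k \<and> \<pi>!k<\<pi>!i"
    using h(2,3) e by auto
next
  assume "\<exists>i k l. i<k \<and> k<l \<and> l<length \<pi> \<and> \<pi>!l<\<pi>!k \<and> \<pi>!k<\<pi>!i"
  then obtain i k l where h: "i<k" "k<l" "l<length \<pi>" "\<pi>!l<\<pi>!k" "\<pi>!k<\<pi>!i" by blast
  show "contains \<pi> [3,2,1]" unfolding contains_def using h
    by (intro exI[of _ "[i,k,l]"]) (simp add: numeral_3_eq_3 All_less_Suc2)
qed

lemma c2143: "contains \<pi> [2,1,4,3] \<longleftrightarrow>
  (\<exists>i k l m. i<k \<and> k<l \<and> l<m \<and> m<length \<pi> \<and> \<pi>!k<\<pi>!i \<and> \<pi>!i<\<pi>!m \<and> \<pi>!m<\<pi>!l)"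
proof
  assume "contains \<pi> [2,1,4,3]"
  then obtain idx where h: "length idx = length [2,1,4,3::nat]" "sorted_wrt (<) idx" "\<forall>i\<in>set idx. i < length \<pi>"
    "\<forall>a < length [2,1,4,3::nat]. \<forall>b < length [2,1,4,3::nat]. (\<pi> ! (idx ! a) < \<pi> ! (idx ! b)) \<longleftrightarrow> ([2,1,4,3::nat] ! a < [2,1,4,3::nat] ! b)"
    unfolding contains_def by blast
  from len4[of idx] h(1) obtain a b c d where e: "idx = [a,b,c,d]" by auto
  have "\<pi>!b<\<pi>!a" "\<pi>!a<\<pi>!d" "\<pi>!d<\<pi>!c" using h(4)[rule_format, of 1 0] h(4)[rule_format, of 0 3]
     h(4)[rule_format, of 3 2] e by auto
  thus "\<exists>i k l m. i<k \<and> k<l \<and> l<m \<and> m<length \<pi> \<and> \<pi>!k<\<pi>!i \<and> \<pi>!i<\<pi>!m \<and> \<pi>!m<\<pi>!l"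
    using h(2,3) e by auto
next
  assume "\<exists>i k l m. i<k \<and> k<l \<and> l<m \<and> m<length \<pi> \<and> \<pi>!k<\<pi>!i \<and> \<pi>!i<\<pi>!m \<and> \<pi>!m<\<pi>!l"
  then obtain i k l m where h: "i<k" "k<l" "l<m" "m<length \<pi>" "\<pi>!k<\<pi>!i" "\<pi>!i<\<pi>!m" "\<pi>!m<\<pi>!l" by blast
  show "contains \<pi> [2,1,4,3]" unfolding contains_def using h
    by (intro exI[of _ "[i,k,l,m]"]) (simp add: numeral_eq_Suc All_less_Suc2)
qed

lemma c3124: "contains \<pi> [3,1,2,4] \<longleftrightarrow>
  (\<exists>i k l m. i<k \<and> k<l \<and> l<m \<and> m<length \<pi> \<and> \<pi>!k<\<pi>!l \<and> \<pi>!l<\<pi>!i \<and> \<pi>!i<\<pi>!m)"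
proof
  assume "contains \<pi> [3,1,2,4]"
  then obtain idx where h: "length idx = length [3,1,2,4::nat]" "sorted_wrt (<) idx" "\<forall>i\<in>set idx. i < length \<pi>"
    "\<forall>a < length [3,1,2,4::nat]. \<forall>b < length [3,1,2,4::nat]. (\<pi> ! (idx ! a) < \<pi> ! (idx ! b)) \<longleftrightarrow> ([3,1,2,4::nat] ! a < [3,1,2,4::nat] ! b)"
    unfolding contains_def by blast
  from len4[of idx] h(1) obtain a b c d where e: "idx = [a,b,c,d]" by auto
  have "\<pi>!b<\<pi>!c" "\<pi>!c<\<pi>!a" "\<pi>!a<\<pi>!d" using h(4)[rule_format, of 1 2] h(4)[rule_format, of 2 0]
     h(4)[rule_format, of 0 3] e by auto
  thus "\<exists>i k l m. i<k \<and> k<l \<and> l<m \<and> m<length \<pi> \<and> \<pi>!k<\<pi>!l \<and> \<pi>!l<\<pi>!i \<and> \<pi>!i<\<pi>!m"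
    using h(2,3) e by auto
next
  assume "\<exists>i k l m. i<k \<and> k<l \<and> l<m \<and> m<length \<pi> \<and> \<pi>!k<\<pi>!l \<and> \<pi>!l<\<pi>!i \<and> \<pi>!i<\<pi>!m"
  then obtain i k l m where h: "i<k" "k<l" "l<m" "m<length \<pi>" "\<pi>!k<\<pi>!l" "\<pi>!l<\<pi>!i" "\<pi>!i<\<pi>!m" by blast
  show "contains \<pi> [3,1,2,4]" unfolding contains_def using h
    by (intro exI[of _ "[i,k,l,m]"]) (simp add: numeral_eq_Suc All_less_Suc2)
qed


lemma shift321: assumes "\<pi> = 1 # map Suc \<sigma>"
  shows "contains \<pi> [3,2,1] \<longleftrightarrow> contains \<sigma> [3,2,1]"
proof
  assume "contains \<pi> [3,2,1]"
  then obtain i k l where h: "i<k" "k<l" "l<length \<pi>" "\<pi>!l<\<pi>!k" "\<pi>!k<\<pi>!i" using c321 by blast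
  have "i \<noteq> 0" using h assms by (cases i; cases k) auto
  then obtain i' where "i = Suc i'" using not0_implies_Suc by blast
  moreover obtain k' where "k = Suc k'" using h(1) by (cases k) auto
  moreover obtain l' where "l = Suc l'" using h(1,2) by (cases l) auto
  ultimately show "contains \<sigma> [3,2,1]" unfolding c321 using h assms
    by (intro exI[of _ i'] exI[of _ k'] exI[of _ l']) auto
next
  assume "contains \<sigma> [3,2,1]"
  then obtain i k l where h: "i<k" "k<l" "l<length \<sigma>" "\<sigma>!l<\<sigma>!k" "\<sigma>!k<\<sigma>!i" using c321 by blast
  show "contains \<pi> [3,2,1]" unfolding c321 using h assms
    by (intro exI[of _ "Suc i"] exI[of _ "Suc k"] exI[of _ "Suc l"]) auto
qed

lemma shift2143: assumes "\<pi> = 1 # map Suc \<sigma>"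
  shows "contains \<pi> [2,1,4,3] \<longleftrightarrow> contains \<sigma> [2,1,4,3]"
proof
  assume "contains \<pi> [2,1,4,3]"
  then obtain i k l m where h: "i<k" "k<l" "l<m" "m<length \<pi>" "\<pi>!k<\<pi>!i" "\<pi>!i<\<pi>!m" "\<pi>!m<\<pi>!l"
    using c2143 by blast
  have "i \<noteq> 0" using h assms by (cases i; cases k) auto
  then obtain i' where "i = Suc i'" using not0_implies_Suc by blast
  moreover obtain k' where "k = Suc k'" using h(1) by (cases k) auto
  moreover obtain l' where "l = Suc l'" using h(1,2) by (cases l) auto
  moreover obtain m' where "m = Suc m'" using h(1,2,3) by (cases m) auto
  ultimately show "contains \<sigma> [2,1,4,3]" unfolding c2143 using h assms
    by (intro exI[of _ i'] exI[of _ k'] exI[of _ l'] exI[of _ m']) auto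
next
  assume "contains \<sigma> [2,1,4,3]"
  then obtain i k l m where h: "i<k" "k<l" "l<m" "m<length \<sigma>" "\<sigma>!k<\<sigma>!i" "\<sigma>!i<\<sigma>!m" "\<sigma>!m<\<sigma>!l"
    using c2143 by blast
  show "contains \<pi> [2,1,4,3]" unfolding c2143 using h assms
    by (intro exI[of _ "Suc i"] exI[of _ "Suc k"] exI[of _ "Suc l"] exI[of _ "Suc m"]) auto
qed

lemma shift3124: assumes "\<pi> = 1 # map Suc \<sigma>"
  shows "contains \<pi> [3,1,2,4] \<longleftrightarrow> contains \<sigma> [3,1,2,4]"
proof
  assume "contains \<pi> [3,1,2,4]"
  then obtain i k l m where h: "i<k" "k<l" "l<m" "m<length \<pi>" "\<pi>!k<\<pi>!l" "\<pi>!l<\<pi>!i" "\<pi>!i<\<pi>!m"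
    using c3124 by blast
  have "i \<noteq> 0" using h assms by (cases i; cases l) auto
  then obtain i' where "i = Suc i'" using not0_implies_Suc by blast
  moreover obtain k' where "k = Suc k'" using h(1) by (cases k) auto
  moreover obtain l' where "l = Suc l'" using h(1,2) by (cases l) auto
  moreover obtain m' where "m = Suc m'" using h(1,2,3) by (cases m) auto
  ultimately show "contains \<sigma> [3,1,2,4]" unfolding c3124 using h assms
    by (intro exI[of _ i'] exI[of _ k'] exI[of _ l'] exI[of _ m']) auto
next
  assume "contains \<sigma> [3,1,2,4]"
  then obtain i k l m where h: "i<k" "k<l" "l<m" "m<length \<sigma>" "\<sigma>!k<\<sigma>!l" "\<sigma>!l<\<sigma>!i" "\<sigma>!i<\<sigma>!m"
    using c3124 by blast
  show "contains \<pi> [3,1,2,4]" unfolding c3124 using h assms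
    by (intro exI[of _ "Suc i"] exI[of _ "Suc k"] exI[of _ "Suc l"] exI[of _ "Suc m"]) auto
qed

lemma shiftfish: assumes "\<pi> = 1 # map Suc \<sigma>"
  shows "fishburn \<pi> \<longleftrightarrow> fishburn \<sigma>"
proof
  assume "fishburn \<sigma>"
  show "fishburn \<pi>" unfolding fishburn_def
  proof
    assume "\<exists>i j. i < j \<and> j < length \<pi> \<and> i + 1 < length \<pi> \<and>
      \<pi> ! j < \<pi> ! i \<and> \<pi> ! i < \<pi> ! (i + 1) \<and> \<pi> ! i = \<pi> ! j + 1"
    then obtain i j where h: "i < j" "j < length \<pi>" "i + 1 < length \<pi>"
      "\<pi> ! j < \<pi> ! i" "\<pi> ! i < \<pi> ! (i + 1)" "\<pi> ! i = \<pi> ! j + 1" by blast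
    have "i \<noteq> 0" using h assms by (cases i; cases j) auto
    then obtain i' where i: "i = Suc i'" using not0_implies_Suc by blast
    obtain j' where j: "j = Suc j'" using h(1) by (cases j) auto
    have "i' < j' \<and> j' < length \<sigma> \<and> i' + 1 < length \<sigma> \<and>
      \<sigma> ! j' < \<sigma> ! i' \<and> \<sigma> ! i' < \<sigma> ! (i' + 1) \<and> \<sigma> ! i' = \<sigma> ! j' + 1"
      using h assms i j by auto
    thus False using \<open>fishburn \<sigma>\<close> unfolding fishburn_def by blast
  qed
next
  assume "fishburn \<pi>"
  show "fishburn \<sigma>" unfolding fishburn_def
  proof
    assume "\<exists>i j. i < j \<and> j < length \<sigma> \<and> i + 1 < length \<sigma> \<and>
      \<sigma> ! j < \<sigma> ! i \<and> \<sigma> ! i < \<sigma> ! (i + 1) \<and> \<sigma> ! i = \<sigma> ! j + 1"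
    then obtain i j where h: "i < j" "j < length \<sigma>" "i + 1 < length \<sigma>"
      "\<sigma> ! j < \<sigma> ! i" "\<sigma> ! i < \<sigma> ! (i + 1)" "\<sigma> ! i = \<sigma> ! j + 1" by blast
    have "Suc i < Suc j \<and> Suc j < length \<pi> \<and> Suc i + 1 < length \<pi> \<and>
      \<pi> ! Suc j < \<pi> ! Suc i \<and> \<pi> ! Suc i < \<pi> ! (Suc i + 1) \<and> \<pi> ! Suc i = \<pi> ! Suc j + 1"
      using h assms by auto
    thus False using \<open>fishburn \<pi>\<close> unfolding fishburn_def by blast
  qed
qed



definition g :: "nat \<Rightarrow> nat \<Rightarrow> nat \<Rightarrow> nat" where
  "g n j i = (if i=0 then j else if i=1 then 1 else if i < n+2-j then i+j-1 else i+j-n)"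

definition tau :: "nat \<Rightarrow> nat \<Rightarrow> nat list" where
  "tau n j = map (g n j) [0..<n]"

lemma tau_nth[simp]: "i < n \<Longrightarrow> tau n j ! i = g n j i" by (simp add: tau_def)
lemma tau_len[simp]: "length (tau n j) = n" by (simp add: tau_def)

context fixes n j :: nat assumes j: "2 \<le> j" "j \<le> n" begin

lemma g0[simp]: "g n j 0 = j" by (simp add: g_def)
lemma g1[simp]: "g n j (Suc 0) = 1" by (simp add: g_def)
lemma gbig: "2 \<le> a \<Longrightarrow> a < n+2-j \<Longrightarrow> j < g n j a" using j by (simp add: g_def)
lemma gsmall: "n+2-j \<le> a \<Longrightarrow> a < n \<Longrightarrow> 2 \<le> g n j a \<and> g n j a < j" using j unfolding g_def by (simp; arith)
lemma gpos: "1 \<le> g n j a" using j unfolding g_def by (simp; arith)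
lemma gmono: "2 \<le> a \<Longrightarrow> a < b \<Longrightarrow> b < n \<Longrightarrow> (a < n+2-j \<longleftrightarrow> b < n+2-j) \<Longrightarrow> g n j a < g n j b"
  using j by (auto simp: g_def)

lemma gord: assumes "2 \<le> a" "a < b" "b < n" "g n j b < g n j a"
  shows "a < n+2-j \<and> n+2-j \<le> b"
  using gmono[of a b] assms by (cases "a < n+2-j"; cases "b < n+2-j") auto

lemma gsm: assumes "2 \<le> a" "a < n" "g n j a < j" shows "n+2-j \<le> a"
  using gbig[of a] assms by linarith

lemma tau321: "\<not> contains (tau n j) [3,2,1]"
proof
  assume "contains (tau n j) [3,2,1]"
  then obtain i k l where h: "i<k" "k<l" "l<n" "g n j l < g n j k" "g n j k < g n j i"
    unfolding c321 by auto
  show False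
  proof (cases "i \<le> 1")
    case True
    then have "i = 0 \<or> i = 1" by auto
    moreover have "k \<noteq> 1" proof assume "k = 1" then show False using h(4) gpos[of l] by simp qed
    ultimately have "i = 0" "2 \<le> k" using h gpos[of k] by auto
    then have "n+2-j \<le> k" using gsm[of k] h by auto
    then show False using gmono[of k l] h \<open>2 \<le> k\<close> by auto
  next
    case False
    then have "n+2-j \<le> k" using gord[of i k] h by auto
    then show False using gmono[of k l] h False by auto
  qed
qed

lemma tau2143: "\<not> contains (tau n j) [2,1,4,3]"
proof
  assume "contains (tau n j) [2,1,4,3]"
  then obtain i k l m where h: "i<k" "k<l" "l<m" "m<n" "g n j k < g n j i" "g n j i < g n j m" "g n j m < g n j l"
    unfolding c2143 by auto
  show False
  proof (cases "i \<le> 1")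
    case True
    then have "i = 0 \<or> i = 1" by auto
    then have "i = 0" using h gpos[of k] by auto
    then have "n+2-j \<le> m" using gord[of l m] h by auto
    then show False using gsmall[of m] h \<open>i=0\<close> by auto
  next
    case False
    then have "n+2-j \<le> k" using gord[of i k] h by auto
    then show False using gmono[of l m] h by auto
  qed
qed

lemma tau3124: "\<not> contains (tau n j) [3,1,2,4]"
proof
  assume "contains (tau n j) [3,1,2,4]"
  then obtain i k l m where h: "i<k" "k<l" "l<m" "m<n" "g n j k < g n j l" "g n j l < g n j i" "g n j i < g n j m"
    unfolding c3124 by auto
  show False
  proof (cases "i \<le> 1")
    case True
    then have "i = 0 \<or> i = 1" by auto
    then have "i = 0" using h gpos[of l] by auto
    then have "n+2-j \<le> l" using gsm[of l] h by auto
    then show False using gsmall[of m] h \<open>i=0\<close> by auto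
  next
    case False
    then have "n+2-j \<le> l" "i < n+2-j" using gord[of i l] h by auto
    then show False using gsmall[of m] gbig[of i] h False by auto
  qed
qed

lemma taufish: "fishburn (tau n j)"
  unfolding fishburn_def
proof
  assume "\<exists>i ja. i < ja \<and> ja < length (tau n j) \<and> i + 1 < length (tau n j) \<and>
      tau n j ! ja < tau n j ! i \<and> tau n j ! i < tau n j ! (i + 1) \<and> tau n j ! i = tau n j ! ja + 1"
  then obtain i k where h: "i<k" "k<n" "i+1<n" "g n j k < g n j i" "g n j i < g n j (i+1)" "g n j i = g n j k + 1"
    by auto
  show False
  proof (cases "i \<le> 1")
    case True
    then have "i = 0 \<or> i = 1" by auto
    then show False using h gpos[of k] j by auto
  next
    case False
    then have "n+2-j \<le> k" "i < n+2-j" using gord[of i k] h by auto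
    then show False using gsmall[of k] gbig[of i] h False by auto
  qed
qed

end


lemma F_iff: "\<pi> \<in> F n [[3,2,1], [2,1,4,3], [3,1,2,4]] \<longleftrightarrow>
  is_perm n \<pi> \<and> fishburn \<pi> \<and> \<not> contains \<pi> [3,2,1] \<and> \<not> contains \<pi> [2,1,4,3] \<and> \<not> contains \<pi> [3,1,2,4]"
  unfolding F_def avoids_def by simp

lemma perm_len: "is_perm n \<pi> \<Longrightarrow> length \<pi> = n"
  unfolding is_perm_def by (metis card_atLeastAtMost diff_Suc_1 distinct_card)

lemma perm_nth: "is_perm n \<pi> \<Longrightarrow> i < n \<Longrightarrow> 1 \<le> \<pi>!i \<and> \<pi>!i \<le> n"
  unfolding is_perm_def using perm_len
  by (metis atLeastAtMost_iff is_perm_def nth_mem)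

lemma perm_ex: "is_perm n \<pi> \<Longrightarrow> 1 \<le> v \<Longrightarrow> v \<le> n \<Longrightarrow> \<exists>k<n. \<pi>!k = v"
  unfolding is_perm_def using perm_len
  by (metis atLeastAtMost_iff in_set_conv_nth is_perm_def)

lemma perm_inj: "is_perm n \<pi> \<Longrightarrow> i < n \<Longrightarrow> k < n \<Longrightarrow> \<pi>!i = \<pi>!k \<Longrightarrow> i = k"
  using perm_len unfolding is_perm_def by (metis nth_eq_iff_index_eq)

context fixes n j :: nat assumes j: "2 \<le> j" "j \<le> n" begin

lemma g_inj: "inj_on (g n j) {0..<n}"
proof (rule inj_onI)
  have key: "g n j a \<noteq> g n j b" if "a < b" "b < n" for a b
  proof (cases "a = 0")
    case True
    then show ?thesis using that gbig[OF j, of b] gsmall[OF j, of b] j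
      by (cases "b = 1"; cases "b < n+2-j") auto
  next
    case a0: False
    show ?thesis
    proof (cases "a = 1")
      case True
      then show ?thesis using that gbig[OF j, of b] gsmall[OF j, of b] j
        by (cases "b < n+2-j") auto
    next
      case False
      then have a2: "2 \<le> a" using a0 by auto
      show ?thesis using a2 that gmono[OF j, of a b] gbig[OF j, of a] gsmall[OF j, of b] gbig[OF j, of b] gsmall[OF j, of a]
        by (cases "a < n+2-j"; cases "b < n+2-j") auto
    qed
  qed
  fix a b assume "a \<in> {0..<n}" "b \<in> {0..<n}" "g n j a = g n j b"
  then show "a = b" using key[of a b] key[of b a] by (metis atLeastLessThan_iff linorder_neqE_nat)
qed

lemma g_range: "a < n \<Longrightarrow> g n j a \<in> {1..n}"
  using j unfolding g_def by (simp; arith)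

lemma tau_perm: "is_perm n (tau n j)"
proof -
  have d: "distinct (tau n j)" unfolding tau_def using g_inj by (simp add: distinct_map)
  have s: "set (tau n j) \<subseteq> {1..n}" unfolding tau_def using g_range by auto
  have "card (set (tau n j)) = n" using d distinct_card by fastforce
  then have "set (tau n j) = {1..n}" using s by (simp add: card_subset_eq)
  with d show ?thesis unfolding is_perm_def by simp
qed

lemma tau_F: "tau n j \<in> F n [[3,2,1], [2,1,4,3], [3,1,2,4]]"
  unfolding F_iff using tau_perm tau321[OF j] tau2143[OF j] tau3124[OF j] taufish[OF j] by simp

end



abbreviation "PS \<equiv> [[3,2,1], [2,1,4,3], [3,1,2,4]] :: nat list list"

lemma second_one:
  assumes F: "\<pi> \<in> F n PS" and j: "\<pi>!0 = j" "2 \<le> j" and n0: "0 < n"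
  shows "\<pi>!1 = 1" "j \<le> n" "2 \<le> n"
proof -
  have P: "is_perm n \<pi>" and fi: "fishburn \<pi>" and a321: "\<not> contains \<pi> [3,2,1]"
    using F unfolding F_iff by auto
  have len: "length \<pi> = n" using perm_len[OF P] .
  show jn: "j \<le> n" using perm_nth[OF P n0] j by simp
  then show n2: "2 \<le> n" using j by simp
  have x: "1 \<le> \<pi>!1" "\<pi>!1 \<le> n" using perm_nth[OF P, of 1] n2 by auto
  have xj: "\<pi>!1 \<noteq> j" using perm_inj[OF P, of 1 0] n2 j by auto
  have "\<not> j < \<pi>!1"
  proof
    assume lt: "j < \<pi>!1"
    have "\<exists>k<n. \<pi>!k = j - 1" using perm_ex[OF P, of "j-1"] j jn by auto
    then obtain k where k: "k < n" "\<pi>!k = j - 1" by blast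
    have "k \<noteq> 0" using k j by (cases k) auto
    moreover have "k \<noteq> 1" using k lt by auto
    ultimately have "0 < k \<and> k < length \<pi> \<and> 0 + 1 < length \<pi> \<and>
      \<pi> ! k < \<pi> ! 0 \<and> \<pi> ! 0 < \<pi> ! (0 + 1) \<and> \<pi> ! 0 = \<pi> ! k + 1"
      using k lt j len n2 by auto
    then show False using fi unfolding fishburn_def by blast
  qed
  then have xl: "\<pi>!1 < j" using xj by auto
  show "\<pi>!1 = 1"
  proof (rule ccontr)
    assume ne: "\<pi>!1 \<noteq> 1"
    obtain k where k: "k < n" "\<pi>!k = 1" using perm_ex[OF P, of 1] n2 by auto
    have "k \<noteq> 0" using k j by (cases k) auto
    moreover have "k \<noteq> 1" using k ne by auto
    ultimately have "0 < (1::nat) \<and> 1 < k \<and> k < length \<pi> \<and> \<pi>!k < \<pi>!1 \<and> \<pi>!1 < \<pi>!0"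
      using k x xl ne j len by auto
    then show False using a321 unfolding c321 by blast
  qed
qed

definition fk :: "nat \<Rightarrow> nat \<Rightarrow> nat \<Rightarrow> nat" where
  "fk n j v = (if v < j then v + n else v)"

lemma sortedS:
  assumes F: "\<pi> \<in> F n PS" and j: "\<pi>!0 = j" "2 \<le> j" and n0: "0 < n"
  shows "sorted_wrt (<) (map (fk n j) (drop 2 \<pi>))"
proof -
  have P: "is_perm n \<pi>" and fi: "fishburn \<pi>" and a321: "\<not> contains \<pi> [3,2,1]"
    and a2143: "\<not> contains \<pi> [2,1,4,3]" and a3124: "\<not> contains \<pi> [3,1,2,4]"
    using F unfolding F_iff by auto
  have len: "length \<pi> = n" using perm_len[OF P] .
  note s = second_one[OF F j n0]
  have key: "fk n j (\<pi>!p) < fk n j (\<pi>!q)" if pq: "2 \<le> p" "p < q" "q < n" for p q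
  proof -
    have u: "1 \<le> \<pi>!p" "\<pi>!p \<le> n" "1 \<le> \<pi>!q" "\<pi>!q \<le> n" using perm_nth[OF P] pq by auto
    have uj: "\<pi>!p \<noteq> j" "\<pi>!q \<noteq> j" using perm_inj[OF P, of p 0] perm_inj[OF P, of q 0] pq j by auto
    have uv: "\<pi>!p \<noteq> \<pi>!q" using perm_inj[OF P, of p q] pq by auto
    have u1: "\<pi>!p \<noteq> \<pi>!1" using perm_inj[OF P, of p 1] pq by auto
    consider "\<pi>!p < j" "\<pi>!q < j" | "\<pi>!p > j" "\<pi>!q > j" | "\<pi>!p < j" "\<pi>!q > j" | "\<pi>!p > j" "\<pi>!q < j"
      using uj by linarith
    then show ?thesis
    proof cases
      case 1
      have "\<not> \<pi>!q < \<pi>!p"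
      proof
        assume "\<pi>!q < \<pi>!p"
        then have "0 < p \<and> p < q \<and> q < length \<pi> \<and> \<pi>!q < \<pi>!p \<and> \<pi>!p < \<pi>!0" using 1 pq j len by auto
        then show False using a321 unfolding c321 by blast
      qed
      then show ?thesis using 1 uv unfolding fk_def by auto
    next
      case 2
      have "\<not> \<pi>!q < \<pi>!p"
      proof
        assume "\<pi>!q < \<pi>!p"
        then have "0 < (1::nat) \<and> 1 < p \<and> p < q \<and> q < length \<pi> \<and> \<pi>!1 < \<pi>!0 \<and> \<pi>!0 < \<pi>!q \<and> \<pi>!q < \<pi>!p"
          using 2 pq j len s by auto
        then show False using a2143 unfolding c2143 by blast
      qed
      then show ?thesis using 2 uv unfolding fk_def by auto
    next
      case 3
      have "0 < (1::nat) \<and> 1 < p \<and> p < q \<and> q < length \<pi> \<and> \<pi>!1 < \<pi>!p \<and> \<pi>!p < \<pi>!0 \<and> \<pi>!0 < \<pi>!q"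
        using 3 pq j len s u uv u1 by auto
      then show ?thesis using a3124 unfolding c3124 by blast
    next
      case 4
      then show ?thesis using u unfolding fk_def by auto
    qed
  qed
  show ?thesis unfolding sorted_wrt_iff_nth_less using key len by auto
qed

lemma set_drop2: "distinct xs \<Longrightarrow> 2 \<le> length xs \<Longrightarrow> set (drop 2 xs) = set xs - {xs!0, xs!1}"
  by (cases xs; cases "tl xs") auto

lemma charac:
  assumes F: "\<pi> \<in> F n PS" and j: "\<pi>!0 = j" "2 \<le> j" and n0: "0 < n"
  shows "\<pi> = tau n j"
proof -
  note s = second_one[OF F j n0]
  have jj: "2 \<le> j" "j \<le> n" using j s by auto
  have Ft: "tau n j \<in> F n PS" using tau_F[OF jj] .
  have t0: "tau n j ! 0 = j" "tau n j ! 1 = 1" using jj by (auto simp: g_def)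
  have P: "is_perm n \<pi>" "is_perm n (tau n j)" using F Ft unfolding F_iff by auto
  have len: "length \<pi> = n" "length (tau n j) = n" using perm_len P by auto
  have S1: "sorted_wrt (<) (map (fk n j) (drop 2 \<pi>))" using sortedS[OF F j n0] .
  have S2: "sorted_wrt (<) (map (fk n j) (drop 2 (tau n j)))" using sortedS[OF Ft t0(1) j(2) n0] .
  have st: "set (drop 2 \<pi>) = set (drop 2 (tau n j))"
    using set_drop2[of \<pi>] set_drop2[of "tau n j"] P len s t0 j unfolding is_perm_def by auto
  have sub: "set (drop 2 \<pi>) \<union> set (drop 2 (tau n j)) \<subseteq> {1..n}"
    using P by (auto simp: is_perm_def dest: in_set_dropD)
  have inj: "inj_on (fk n j) {1..n}"
    by (rule inj_onI) (auto simp: fk_def split: if_splits)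
  have "drop 2 \<pi> = drop 2 (tau n j)"
    apply (rule map_sorted_distinct_set_unique[of "fk n j"])
    using inj_on_subset[OF inj sub] S1 S2 st by (auto simp: strict_sorted_iff)
  moreover have "\<pi> = \<pi>!0 # \<pi>!1 # drop 2 \<pi>" using len s
    by (cases \<pi>; cases "tl \<pi>") auto
  moreover have "tau n j = tau n j!0 # tau n j!1 # drop 2 (tau n j)" using len s
    by (cases "tau n j"; cases "tl (tau n j)") auto
  ultimately show ?thesis using s t0 j by metis
qed



lemma perm_shift: "is_perm (Suc m) (1 # map Suc \<sigma>) \<longleftrightarrow> is_perm m \<sigma>"
proof
  assume "is_perm m \<sigma>"
  then have d: "distinct \<sigma>" and s: "set \<sigma> = {1..m}" unfolding is_perm_def by auto
  have "Suc ` {1..m} = {2..Suc m}" by (simp add: image_Suc_atLeastAtMost)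
  then have "insert 1 (Suc ` set \<sigma>) = {1..Suc m}" using s by auto
  moreover have "distinct (1 # map Suc \<sigma>)" using d s by (auto simp: distinct_map)
  ultimately show "is_perm (Suc m) (1 # map Suc \<sigma>)" unfolding is_perm_def by simp
next
  assume h: "is_perm (Suc m) (1 # map Suc \<sigma>)"
  then have d: "distinct \<sigma>" "0 \<notin> set \<sigma>" and s: "insert 1 (Suc ` set \<sigma>) = {1..Suc m}"
    unfolding is_perm_def by (auto simp: distinct_map)
  have "set \<sigma> = {1..m}"
  proof (intro set_eqI iffI)
    fix x assume "x \<in> set \<sigma>"
    then have "Suc x \<in> {1..Suc m}" using s by blast
    moreover have "x \<noteq> 0" using d(2) \<open>x \<in> set \<sigma>\<close> by metis
    ultimately show "x \<in> {1..m}" by auto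
  next
    fix x assume "x \<in> {1..m}"
    then have "Suc x \<in> insert 1 (Suc ` set \<sigma>)" using s by auto
    then show "x \<in> set \<sigma>" using \<open>x \<in> {1..m}\<close> by auto
  qed
  with d show "is_perm m \<sigma>" unfolding is_perm_def by simp
qed

lemma F_shift: "(1 # map Suc \<sigma>) \<in> F (Suc m) PS \<longleftrightarrow> \<sigma> \<in> F m PS"
  unfolding F_iff using perm_shift shift321[OF refl] shift2143[OF refl] shift3124[OF refl] shiftfish[OF refl]
  by simp

lemma F0: "F 0 PS = {[]}"
proof -
  have "\<pi> \<in> F 0 PS \<longleftrightarrow> \<pi> = []" for \<pi>
  proof
    assume "\<pi> \<in> F 0 PS" then show "\<pi> = []" unfolding F_iff is_perm_def by auto
  next
    assume "\<pi> = []" then show "\<pi> \<in> F 0 PS" unfolding F_iff is_perm_def fishburn_def c321 c2143 c3124 by auto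
  qed
  then show ?thesis by auto
qed

lemma Fsuc: "F (Suc m) PS = (\<lambda>\<sigma>. 1 # map Suc \<sigma>) ` F m PS \<union> tau (Suc m) ` {2..Suc m}"
proof (intro set_eqI iffI)
  fix \<pi> assume F: "\<pi> \<in> F (Suc m) PS"
  then have P: "is_perm (Suc m) \<pi>" unfolding F_iff by auto
  have len: "length \<pi> = Suc m" using perm_len[OF P] .
  have r: "1 \<le> \<pi>!0" using perm_nth[OF P, of 0] by auto
  show "\<pi> \<in> (\<lambda>\<sigma>. 1 # map Suc \<sigma>) ` F m PS \<union> tau (Suc m) ` {2..Suc m}"
  proof (cases "\<pi>!0 = 1")
    case True
    define \<sigma> where "\<sigma> = map (\<lambda>x. x - 1) (tl \<pi>)"
    have "\<forall>x\<in>set (tl \<pi>). 1 \<le> x" using P unfolding is_perm_def by (cases \<pi>) auto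
    then have "map Suc \<sigma> = tl \<pi>" unfolding \<sigma>_def by (auto intro!: map_idI)
    then have e: "\<pi> = 1 # map Suc \<sigma>" using True len by (cases \<pi>) auto
    then have "\<sigma> \<in> F m PS" using F F_shift by simp
    then show ?thesis using e by auto
  next
    case False
    then have j: "2 \<le> \<pi>!0" using r by auto
    have "\<pi> = tau (Suc m) (\<pi>!0)" using charac[OF F refl j] by simp
    moreover have "\<pi>!0 \<le> Suc m" using second_one[OF F refl j] by simp
    ultimately show ?thesis using j by auto
  qed
next
  fix \<pi> assume "\<pi> \<in> (\<lambda>\<sigma>. 1 # map Suc \<sigma>) ` F m PS \<union> tau (Suc m) ` {2..Suc m}"
  then show "\<pi> \<in> F (Suc m) PS" using F_shift tau_F by auto
qed

lemma F_fin: "finite (F n PS)"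
proof -
  have "F n PS \<subseteq> {xs. set xs \<subseteq> {1..n} \<and> length xs = n}"
  proof
    fix x assume "x \<in> F n PS"
    then have "is_perm n x" unfolding F_iff by blast
    then show "x \<in> {xs. set xs \<subseteq> {1..n} \<and> length xs = n}" using perm_len unfolding is_perm_def by auto
  qed
  then show ?thesis using finite_lists_length_eq[of "{1..n}" n] finite_subset by blast
qed

lemma card_suc: "card (F (Suc m) PS) = card (F m PS) + m"
proof -
  have inj1: "inj_on (\<lambda>\<sigma>. 1 # map Suc \<sigma>) (F m PS)" by (rule inj_onI) (simp add: inj_map_eq_map)
  have inj2: "inj_on (tau (Suc m)) {2..Suc m}"
  proof (rule inj_onI)
    fix a b assume "a \<in> {2..Suc m}" "b \<in> {2..Suc m}" "tau (Suc m) a = tau (Suc m) b"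
    then have "tau (Suc m) a ! 0 = tau (Suc m) b ! 0" by simp
    then show "a = b" by (simp add: g_def)
  qed
  have disj: "(\<lambda>\<sigma>. 1 # map Suc \<sigma>) ` F m PS \<inter> tau (Suc m) ` {2..Suc m} = {}"
  proof (rule ccontr)
    assume "\<not> ?thesis"
    then obtain \<sigma> a where "1 # map Suc \<sigma> = tau (Suc m) a" "a \<in> {2..Suc m}" by blast
    then have "(1 # map Suc \<sigma>) ! 0 = tau (Suc m) a ! 0" "2 \<le> a" by auto
    then show False by (simp add: g_def)
  qed
  have "card (F (Suc m) PS) = card ((\<lambda>\<sigma>. 1 # map Suc \<sigma>) ` F m PS) + card (tau (Suc m) ` {2..Suc m})"
    unfolding Fsuc by (rule card_Un_disjoint) (use F_fin disj in auto)
  also have "\<dots> = card (F m PS) + m" using card_image[OF inj1] card_image[OF inj2] by simp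
  finally show ?thesis .
qed

theorem mainTheorem11:
  fixes n :: nat
  shows "card (F n [[3,2,1], [2,1,4,3], [3,1,2,4]]) = (n choose 2) + 1"
proof (induction n)
  case 0
  then show ?case using F0 by simp
next
  case (Suc m)
  have "Suc m choose 2 = (m choose 1) + (m choose 2)"
    by (simp add: numeral_2_eq_2)
  then show ?case using card_suc[of m] Suc by simp
qed

end
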